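(* Let $0<\varepsilon_0\le1$ and let $A,B,C$ be $(h_A,k_A)$-, $(h_B,k_B)$-, $(h_C,k_C)$-expansions on $(0,\varepsilon_0]$. With the operations on expansions defined in the context, the following hold as identities of expansions (equal parameters $h,k$, equal coefficients and equal remainders for the two sides): (i) $A+0=A$ where $0$ is the $(h_A,k_A)$-expansion with zero coefficients and zero remainder; $A\cdot1=A$ where $1$ is the $(0,k_A-h_A)$-expansion $1+0\varepsilon+\dots+0\varepsilon^{k_A-h_A}$ with zero remainder; $A+(-1)A=0$ (the $(h_A,k_A)$-expansion of $0$); and, if $A$ is pivotal, $A\cdot A^{-1}=1$ (the $(0,k_A-h_A)$-expansion of $1$), valid on an interval $(0,\varepsilon'_0]$ where $A(\varepsilon)\ne0$; (ii) $A+B=B+A$ and $(A+B)+C=A+(B+C)$; (iii) $A\cdot B=B\cdot A$ and $(A\cdot B)\cdot C=A\cdot(B\cdot C)$; (iv) $(A+B)\cdot C=A\cdot C+B\cdot C$.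
   Context: A $(h,k)$-expansion of a real function $A$ on $(0,\varepsilon_0]$: $A(\varepsilon)=\sum_{l=h}^ka_l\varepsilon^l+o_A(\varepsilon^k)$ with integers $h\le k$, real $a_l$, $o_A(\varepsilon^k)/\varepsilon^k\to0$; pivotal means $a_h\ne0$. Operations (with $\wedge$ = min): Scalar multiple $cA$: $(h_A,k_A)$-expansion with coefficients $ca_l$ and remainder $co_A$. Sum $A+B$: $(h_A\wedge h_B,\,k_A\wedge k_B)$-expansion with coefficients $a_l+b_l$ (missing coefficients below $h_A$ resp. $h_B$ taken as $0$) and remainder $\sum_{k<i\le k_A}a_i\varepsilon^i+\sum_{k<j\le k_B}b_j\varepsilon^j+o_A+o_B$ where $k=k_A\wedge k_B$. Product $A\cdot B$: $(h_A+h_B,\,(k_A+h_B)\wedge(k_B+h_A))$-expansion with coefficients $c_{h_A+h_B+r}=\sum_{0\le i\le r}a_{h_A+i}b_{h_B+r-i}$ and remainder $\sum_{k<i+j}a_ib_j\varepsilon^{i+j}+\sum_ia_i\varepsilon^io_B+\sum_jb_j\varepsilon^jo_A+o_Ao_B$, $k$ being the new upper parameter. Reciprocal $B^{-1}$ of a pivotal $B$ (on an interval where $B\ne0$): $(-h_B,\,k_B-2h_B)$-expansion with $c_{-h_B}=b_{h_B}^{-1}$, $c_{-h_B+r}=-b_{h_B}^{-1}\sum_{1\le i\le r}b_{h_B+i}c_{-h_B+r-i}$, and remainder equal to $B^{-1}$ minus this polynomial. *)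

theory Defs
  imports Complex_Main
begin

text \<open>An (h,k)-expansion: parameters h \<le> k (integers), coefficients a_l (only
  l in [h,k] are meaningful) and a remainder function o_A.\<close>

record expn =
  lo :: int
  hi :: int
  cf :: "int \<Rightarrow> real"
  rm :: "real \<Rightarrow> real"

definition cf_at :: "expn \<Rightarrow> int \<Rightarrow> real" where
  "cf_at E l = (if lo E \<le> l \<and> l \<le> hi E then cf E l else 0)"

definition poly_part :: "expn \<Rightarrow> real \<Rightarrow> real" where
  "poly_part E x = (\<Sum>l\<in>{lo E..hi E}. cf_at E l * x powi l)"

definition expn_val :: "expn \<Rightarrow> real \<Rightarrow> real" where
  "expn_val E x = poly_part E x + rm E x"

definition is_expn :: "expn \<Rightarrow> bool" where
  "is_expn E \<longleftrightarrow> lo E \<le> hi E \<and>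
     ((\<lambda>x. rm E x / x powi hi E) \<longlongrightarrow> 0) (at_right 0)"

definition pivotal :: "expn \<Rightarrow> bool" where
  "pivotal E \<longleftrightarrow> cf E (lo E) \<noteq> 0"

definition expn_eq_on :: "real \<Rightarrow> expn \<Rightarrow> expn \<Rightarrow> bool" where
  "expn_eq_on e E F \<longleftrightarrow> lo E = lo F \<and> hi E = hi F \<and>
     (\<forall>l\<in>{lo E..hi E}. cf E l = cf F l) \<and>
     (\<forall>x\<in>{0<..e}. rm E x = rm F x)"

definition expn_zero :: "int \<Rightarrow> int \<Rightarrow> expn" where
  "expn_zero h k = \<lparr>lo = h, hi = k, cf = (\<lambda>_. 0), rm = (\<lambda>_. 0)\<rparr>"

definition expn_one :: "int \<Rightarrow> expn" where
  "expn_one k = \<lparr>lo = 0, hi = k, cf = (\<lambda>l. if l = 0 then 1 else 0), rm = (\<lambda>_. 0)\<rparr>"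

definition expn_scale :: "real \<Rightarrow> expn \<Rightarrow> expn" where
  "expn_scale c A = \<lparr>lo = lo A, hi = hi A, cf = (\<lambda>l. c * cf A l),
                      rm = (\<lambda>x. c * rm A x)\<rparr>"

definition expn_add :: "expn \<Rightarrow> expn \<Rightarrow> expn" where
  "expn_add A B = (let k = min (hi A) (hi B) in
     \<lparr>lo = min (lo A) (lo B), hi = k,
      cf = (\<lambda>l. cf_at A l + cf_at B l),
      rm = (\<lambda>x. (\<Sum>i\<in>{k<..hi A}. cf_at A i * x powi i)
              + (\<Sum>j\<in>{k<..hi B}. cf_at B j * x powi j) + rm A x + rm B x)\<rparr>)"

definition expn_mult :: "expn \<Rightarrow> expn \<Rightarrow> expn" where
  "expn_mult A B = (let h = lo A + lo B; k = min (hi A + lo B) (hi B + lo A) in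
     \<lparr>lo = h, hi = k,
      cf = (\<lambda>l. if h \<le> l then
                  (\<Sum>i\<in>{0..nat (l - h)}. cf_at A (lo A + int i) * cf_at B (lo B + (l - h) - int i))
                else 0),
      rm = (\<lambda>x. (\<Sum>i\<in>{lo A..hi A}. \<Sum>j\<in>{lo B..hi B}.
                    if k < i + j then cf_at A i * cf_at B j * x powi (i + j) else 0)
              + (\<Sum>i\<in>{lo A..hi A}. cf_at A i * x powi i) * rm B x
              + (\<Sum>j\<in>{lo B..hi B}. cf_at B j * x powi j) * rm A x
              + rm A x * rm B x)\<rparr>)"

text \<open>Coefficients c_{-h+r} of the reciprocal, given b (coefficient function) and h.\<close>
fun recip_c :: "(int \<Rightarrow> real) \<Rightarrow> int \<Rightarrow> nat \<Rightarrow> real" where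
  "recip_c b h r = (if r = 0 then inverse (b h)
     else - inverse (b h) * (\<Sum>i\<in>{1..r}. b (h + int i) * recip_c b h (r - i)))"

definition expn_inv :: "expn \<Rightarrow> expn" where
  "expn_inv B = (let h = lo B; k = hi B;
       c = (\<lambda>l. if - h \<le> l \<and> l \<le> k - 2 * h then recip_c (cf_at B) h (nat (l + h)) else 0) in
     \<lparr>lo = - h, hi = k - 2 * h, cf = c,
      rm = (\<lambda>x. inverse (expn_val B x) - (\<Sum>l\<in>{- h..k - 2 * h}. c l * x powi l))\<rparr>)"

end

theory Submission
  imports Defs
begin

lemma sum_same:
  assumes "finite S" "finite T" "\<And>x. x\<in>S \<Longrightarrow> x\<in>T \<Longrightarrow> f x = g x"
    "\<And>x. x\<in>S \<Longrightarrow> x\<notin>T \<Longrightarrow> f x = 0" "\<And>x. x\<in>T \<Longrightarrow> x\<notin>S \<Longrightarrow> g x = 0"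
  shows "sum f S = sum g T"
proof -
  have "sum f S = sum f (S \<inter> T)" by (rule sum.mono_neutral_right) (use assms in auto)
  also have "\<dots> = sum g (S \<inter> T)" by (rule sum.cong) (use assms in auto)
  also have "\<dots> = sum g T" by (rule sum.mono_neutral_left) (use assms in auto)
  finally show ?thesis .
qed

lemma sum_refl_int: "(\<Sum>i\<in>{a..b::int}. f (l - i)) = (\<Sum>j\<in>{l-b..l-a}. f j)"
  by (rule sum.reindex_bij_witness[where i="\<lambda>j. l - j" and j="\<lambda>i. l - i"]) auto

lemma sum_shift_int: "(\<Sum>j\<in>{a..b::int}. f j) = (\<Sum>i\<in>{a-c..b-c}. f (i + c))"
  by (rule sum.reindex_bij_witness[where i="\<lambda>i. i + c" and j="\<lambda>j. j - c"]) auto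

lemma cf_at_out: "l < lo E \<or> hi E < l \<Longrightarrow> cf_at E l = 0"
  by (auto simp: cf_at_def)

lemma add_sel[simp]: "lo (expn_add A B) = min (lo A) (lo B)" "hi (expn_add A B) = min (hi A) (hi B)"
  "cf (expn_add A B) = (\<lambda>l. cf_at A l + cf_at B l)"
  "rm (expn_add A B) = (\<lambda>x. (\<Sum>i\<in>{min (hi A) (hi B)<..hi A}. cf_at A i * x powi i)
              + (\<Sum>j\<in>{min (hi A) (hi B)<..hi B}. cf_at B j * x powi j) + rm A x + rm B x)"
  by (simp_all add: expn_add_def Let_def)

lemma mult_sel[simp]: "lo (expn_mult A B) = lo A + lo B"
  "hi (expn_mult A B) = min (hi A + lo B) (hi B + lo A)"
  "rm (expn_mult A B) = (\<lambda>x. (\<Sum>i\<in>{lo A..hi A}. \<Sum>j\<in>{lo B..hi B}.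
                    if min (hi A + lo B) (hi B + lo A) < i + j then cf_at A i * cf_at B j * x powi (i + j) else 0)
              + (\<Sum>i\<in>{lo A..hi A}. cf_at A i * x powi i) * rm B x
              + (\<Sum>j\<in>{lo B..hi B}. cf_at B j * x powi j) * rm A x
              + rm A x * rm B x)"
  by (simp_all add: expn_mult_def Let_def)

lemma cf_at_add: "l \<le> min (hi A) (hi B) \<Longrightarrow> cf_at (expn_add A B) l = cf_at A l + cf_at B l"
  by (auto simp: cf_at_def)

lemma cf_at_mult:
  assumes "l \<le> hi (expn_mult A B)"
  shows "cf_at (expn_mult A B) l = (\<Sum>i\<in>{lo A..hi A}. cf_at A i * cf_at B (l - i))"
proof (cases "lo A + lo B \<le> l")
  case True
  have "cf_at (expn_mult A B) l = (\<Sum>r\<in>{0..nat (l - (lo A + lo B))}. cf_at A (lo A + int r) * cf_at B (lo B + (l - (lo A + lo B)) - int r))"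
    using True assms by (simp add: cf_at_def expn_mult_def Let_def)
  also have "\<dots> = (\<Sum>i\<in>{lo A..l - lo B}. cf_at A i * cf_at B (l - i))"
    by (rule sum.reindex_bij_witness[where i="\<lambda>i. nat (i - lo A)" and j="\<lambda>r. lo A + int r"])
       (use True in \<open>auto simp: algebra_simps\<close>)
  also have "\<dots> = (\<Sum>i\<in>{lo A..hi A}. cf_at A i * cf_at B (l - i))"
    by (rule sum_same) (auto simp: cf_at_out)
  finally show ?thesis .
next
  case False
  then have "cf_at (expn_mult A B) l = 0" by (simp add: cf_at_def)
  moreover have "(\<Sum>i\<in>{lo A..hi A}. cf_at A i * cf_at B (l - i)) = 0"
    by (rule sum.neutral) (use False in \<open>auto simp: cf_at_out\<close>)
  ultimately show ?thesis by simp
qed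


lemma poly_part_cong:
  assumes "lo E = lo F" "hi E = hi F" "\<forall>l\<in>{lo E..hi E}. cf_at E l = cf_at F l"
  shows "poly_part E x = poly_part F x"
  unfolding poly_part_def using assms by (intro sum.cong) auto

lemma eq_from_val:
  assumes "lo E = lo F" "hi E = hi F" "\<forall>l\<in>{lo E..hi E}. cf_at E l = cf_at F l"
    "\<forall>x\<in>{0<..e}. expn_val E x = expn_val F x"
  shows "expn_eq_on e E F"
proof -
  have "\<forall>l\<in>{lo E..hi E}. cf E l = cf F l" using assms(1-3) by (auto simp: cf_at_def)
  moreover have "\<forall>x\<in>{0<..e}. rm E x = rm F x"
  proof
    fix x assume "x \<in> {0<..e}"
    then have "poly_part E x + rm E x = poly_part F x + rm F x" using assms(4) by (simp add: expn_val_def)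
    then show "rm E x = rm F x" using poly_part_cong[OF assms(1-3)] by simp
  qed
  ultimately show ?thesis using assms by (simp add: expn_eq_on_def)
qed

lemma val_add: "expn_val (expn_add A B) x = expn_val A x + expn_val B x"
proof -
  define m where "m = min (lo A) (lo B)"
  define k where "k = min (hi A) (hi B)"
  have pp: "poly_part (expn_add A B) x = (\<Sum>l\<in>{m..k}. cf_at A l * x powi l) + (\<Sum>l\<in>{m..k}. cf_at B l * x powi l)"
    unfolding poly_part_def m_def k_def
    by (simp add: sum.distrib[symmetric] cf_at_add distrib_right)
  have s: "(\<Sum>l\<in>{m..k}. cf_at E l * x powi l) + (\<Sum>i\<in>{k<..hi E}. cf_at E i * x powi i) = poly_part E x"
    if "m \<le> lo E" "k \<le> hi E" for E
  proof -
    have "(\<Sum>l\<in>{m..k}. cf_at E l * x powi l) + (\<Sum>i\<in>{k<..hi E}. cf_at E i * x powi i)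
        = (\<Sum>l\<in>{m..k} \<union> {k<..hi E}. cf_at E l * x powi l)"
      by (rule sum.union_disjoint[symmetric]) auto
    also have "\<dots> = poly_part E x" unfolding poly_part_def
      by (rule sum_same) (use that in \<open>auto simp: cf_at_out\<close>)
    finally show ?thesis .
  qed
  have "m \<le> lo A" "m \<le> lo B" "k \<le> hi A" "k \<le> hi B" by (auto simp: m_def k_def)
  then show ?thesis
    using s[of A] s[of B] pp unfolding expn_val_def by (simp add: m_def k_def)
qed

lemma val_mult:
  assumes x: "x \<noteq> 0"
  shows "expn_val (expn_mult A B) x = expn_val A x * expn_val B x"
proof -
  define h where "h = lo A + lo B"
  define k where "k = min (hi A + lo B) (hi B + lo A)"
  define X where "X = (\<lambda>i j. cf_at A i * cf_at B j * x powi (i + j))"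
  have Xeq: "X i j = (cf_at A i * x powi i) * (cf_at B j * x powi j)" for i j
    using x by (simp add: X_def power_int_add)
  have pp: "poly_part (expn_mult A B) x =
     (\<Sum>i\<in>{lo A..hi A}. \<Sum>j\<in>{lo B..hi B}. if k < i + j then 0 else X i j)"
  proof -
    have "poly_part (expn_mult A B) x = (\<Sum>l\<in>{h..k}. (\<Sum>i\<in>{lo A..hi A}. cf_at A i * cf_at B (l - i)) * x powi l)"
      unfolding poly_part_def h_def k_def by (intro sum.cong) (auto simp: cf_at_mult)
    also have "\<dots> = (\<Sum>i\<in>{lo A..hi A}. \<Sum>l\<in>{h..k}. cf_at A i * cf_at B (l - i) * x powi l)"
      by (simp add: sum_distrib_right sum.swap[of _ "{h..k}"])
    also have "\<dots> = (\<Sum>i\<in>{lo A..hi A}. \<Sum>j\<in>{h-i..k-i}. cf_at A i * cf_at B (j + i - i) * x powi (j + i))"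
      by (rule sum.cong[OF refl], rule sum_shift_int)
    also have "\<dots> = (\<Sum>i\<in>{lo A..hi A}. \<Sum>j\<in>{lo B..hi B}. if k < i + j then 0 else X i j)"
    proof (rule sum.cong[OF refl])
      fix i assume i: "i \<in> {lo A..hi A}"
      show "(\<Sum>j\<in>{h-i..k-i}. cf_at A i * cf_at B (j + i - i) * x powi (j + i)) =
            (\<Sum>j\<in>{lo B..hi B}. if k < i + j then 0 else X i j)"
        by (rule sum_same) (use i in \<open>auto simp: X_def h_def cf_at_out add.commute\<close>)
    qed
    finally show ?thesis .
  qed
  have prod: "poly_part A x * poly_part B x = (\<Sum>i\<in>{lo A..hi A}. \<Sum>j\<in>{lo B..hi B}. X i j)"
    unfolding poly_part_def sum_product Xeq ..
  have split: "(\<Sum>i\<in>{lo A..hi A}. \<Sum>j\<in>{lo B..hi B}. X i j) =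
      (\<Sum>i\<in>{lo A..hi A}. \<Sum>j\<in>{lo B..hi B}. if k < i + j then X i j else 0)
    + (\<Sum>i\<in>{lo A..hi A}. \<Sum>j\<in>{lo B..hi B}. if k < i + j then 0 else X i j)"
    by (simp add: sum.distrib[symmetric] if_distrib if_distribR cong: if_cong)
  have rmM: "rm (expn_mult A B) x = (\<Sum>i\<in>{lo A..hi A}. \<Sum>j\<in>{lo B..hi B}. if k < i + j then X i j else 0)
      + poly_part A x * rm B x + poly_part B x * rm A x + rm A x * rm B x"
    unfolding X_def k_def poly_part_def by simp
  show ?thesis
    unfolding expn_val_def pp rmM using prod split by (simp add: algebra_simps)
qed


lemma zero_sel[simp]: "lo (expn_zero h k) = h" "hi (expn_zero h k) = k" "cf (expn_zero h k) = (\<lambda>_. 0)" "rm (expn_zero h k) = (\<lambda>_. 0)"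
  by (simp_all add: expn_zero_def)
lemma one_sel[simp]: "lo (expn_one n) = 0" "hi (expn_one n) = n" "cf (expn_one n) = (\<lambda>l. if l = 0 then 1 else 0)" "rm (expn_one n) = (\<lambda>_. 0)"
  by (simp_all add: expn_one_def)
lemma scale_sel[simp]: "lo (expn_scale c A) = lo A" "hi (expn_scale c A) = hi A" "cf (expn_scale c A) = (\<lambda>l. c * cf A l)" "rm (expn_scale c A) = (\<lambda>x. c * rm A x)"
  by (simp_all add: expn_scale_def)
lemma cf_at_zero[simp]: "cf_at (expn_zero h k) l = 0"
  by (simp add: cf_at_def)

lemma val_zero[simp]: "expn_val (expn_zero h k) x = 0"
  by (simp add: expn_val_def poly_part_def)

lemma cf_at_one: "0 \<le> n \<Longrightarrow> cf_at (expn_one n) j = (if j = 0 then 1 else 0)"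
  by (simp add: cf_at_def)

lemma val_one: "0 \<le> n \<Longrightarrow> expn_val (expn_one n) x = 1"
proof -
  assume n: "0 \<le> n"
  have "poly_part (expn_one n) x = (\<Sum>l\<in>{0..n}. if l = 0 then 1 else 0)"
    unfolding poly_part_def using n by (intro sum.cong) (auto simp: cf_at_one)
  also have "\<dots> = 1" using n by simp
  finally show ?thesis by (simp add: expn_val_def)
qed

lemma cf_at_scale: "cf_at (expn_scale c A) l = c * cf_at A l"
  by (simp add: cf_at_def)

lemma val_scale: "expn_val (expn_scale c A) x = c * expn_val A x"
  by (simp add: expn_val_def poly_part_def cf_at_scale sum_distrib_left algebra_simps)

lemma id_add_zero: "expn_eq_on e (expn_add A (expn_zero (lo A) (hi A))) A"
  by (rule eq_from_val) (auto simp: cf_at_add val_add)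

lemma id_mult_one:
  assumes "lo A \<le> hi A"
  shows "expn_eq_on e (expn_mult A (expn_one (hi A - lo A))) A"
proof (rule eq_from_val)
  show "lo (expn_mult A (expn_one (hi A - lo A))) = lo A" by simp
  show "hi (expn_mult A (expn_one (hi A - lo A))) = hi A" by simp
  show "\<forall>l\<in>{lo (expn_mult A (expn_one (hi A - lo A)))..hi (expn_mult A (expn_one (hi A - lo A)))}.
    cf_at (expn_mult A (expn_one (hi A - lo A))) l = cf_at A l"
  proof
    fix l assume l: "l \<in> {lo (expn_mult A (expn_one (hi A - lo A)))..hi (expn_mult A (expn_one (hi A - lo A)))}"
    then have l': "l \<in> {lo A..hi A}" by simp
    have "cf_at (expn_mult A (expn_one (hi A - lo A))) l
        = (\<Sum>i\<in>{lo A..hi A}. cf_at A i * (if l - i = 0 then 1 else 0))"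
      using l assms by (simp add: cf_at_mult cf_at_one del: mult_sel)
    also have "\<dots> = (\<Sum>i\<in>{lo A..hi A}. if i = l then cf_at A i else 0)"
      by (intro sum.cong) auto
    also have "\<dots> = cf_at A l" using l' by simp
    finally show "cf_at (expn_mult A (expn_one (hi A - lo A))) l = cf_at A l" .
  qed
  show "\<forall>x\<in>{0<..e}. expn_val (expn_mult A (expn_one (hi A - lo A))) x = expn_val A x"
    using assms by (simp add: val_mult val_one)
qed

lemma id_add_neg: "expn_eq_on e (expn_add A (expn_scale (-1) A)) (expn_zero (lo A) (hi A))"
  by (rule eq_from_val) (auto simp: cf_at_add cf_at_scale val_add val_scale)

lemma id_add_comm: "expn_eq_on e (expn_add A B) (expn_add B A)"
  by (rule eq_from_val) (auto simp: cf_at_add val_add)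

lemma id_add_assoc: "expn_eq_on e (expn_add (expn_add A B) C) (expn_add A (expn_add B C))"
  by (rule eq_from_val) (auto simp: cf_at_add val_add min.assoc)

lemma id_mult_comm: "expn_eq_on e (expn_mult A B) (expn_mult B A)"
proof (rule eq_from_val)
  show "\<forall>l\<in>{lo (expn_mult A B)..hi (expn_mult A B)}. cf_at (expn_mult A B) l = cf_at (expn_mult B A) l"
  proof
    fix l assume l: "l \<in> {lo (expn_mult A B)..hi (expn_mult A B)}"
    have "cf_at (expn_mult A B) l = (\<Sum>i\<in>{lo A..hi A}. cf_at A i * cf_at B (l - i))"
      using l by (intro cf_at_mult) simp
    also have "\<dots> = (\<Sum>i\<in>{lo A..hi A}. (\<lambda>j. cf_at A (l - j) * cf_at B j) (l - i))"
      by simp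
    also have "\<dots> = (\<Sum>j\<in>{l - hi A..l - lo A}. cf_at A (l - j) * cf_at B j)"
      by (rule sum_refl_int)
    also have "\<dots> = (\<Sum>j\<in>{lo B..hi B}. cf_at B j * cf_at A (l - j))"
      by (rule sum_same) (auto simp: cf_at_out)
    also have "\<dots> = cf_at (expn_mult B A) l"
      using l by (intro cf_at_mult[symmetric]) (simp add: ac_simps)
    finally show "cf_at (expn_mult A B) l = cf_at (expn_mult B A) l" .
  qed
qed (auto simp: val_mult ac_simps)

lemma id_mult_assoc: "expn_eq_on e (expn_mult (expn_mult A B) C) (expn_mult A (expn_mult B C))"
proof (rule eq_from_val)
  show "\<forall>l\<in>{lo (expn_mult (expn_mult A B) C)..hi (expn_mult (expn_mult A B) C)}.
     cf_at (expn_mult (expn_mult A B) C) l = cf_at (expn_mult A (expn_mult B C)) l"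
  proof
    fix l assume l: "l \<in> {lo (expn_mult (expn_mult A B) C)..hi (expn_mult (expn_mult A B) C)}"
    let ?IAB = "{lo A + lo B..min (hi A + lo B) (hi B + lo A)}"
    have "cf_at (expn_mult (expn_mult A B) C) l = (\<Sum>m\<in>?IAB. cf_at (expn_mult A B) m * cf_at C (l - m))"
      using l by (subst cf_at_mult) auto
    also have "\<dots> = (\<Sum>m\<in>?IAB. \<Sum>i\<in>{lo A..hi A}. cf_at A i * cf_at B (m - i) * cf_at C (l - m))"
      by (intro sum.cong refl) (simp add: cf_at_mult sum_distrib_right)
    also have "\<dots> = (\<Sum>i\<in>{lo A..hi A}. cf_at A i * (\<Sum>m\<in>?IAB. cf_at B (m - i) * cf_at C (l - m)))"
      by (subst sum.swap) (simp add: sum_distrib_left mult.assoc)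
    also have "\<dots> = (\<Sum>i\<in>{lo A..hi A}. cf_at A i * (\<Sum>j\<in>{lo B..hi B}. cf_at B j * cf_at C (l - i - j)))"
    proof (rule sum.cong[OF refl])
      fix i assume i: "i \<in> {lo A..hi A}"
      have "(\<Sum>m\<in>?IAB. cf_at B (m - i) * cf_at C (l - m)) =
         (\<Sum>j\<in>{lo A + lo B - i..min (hi A + lo B) (hi B + lo A) - i}. cf_at B (j + i - i) * cf_at C (l - (j + i)))"
        by (rule sum_shift_int)
      also have "\<dots> = (\<Sum>j\<in>{lo B..hi B}. cf_at B j * cf_at C (l - i - j))"
        by (rule sum_same) (use i l in \<open>auto simp: cf_at_out algebra_simps\<close>)
      finally show "cf_at A i * (\<Sum>m\<in>?IAB. cf_at B (m - i) * cf_at C (l - m)) = cf_at A i * (\<Sum>j\<in>{lo B..hi B}. cf_at B j * cf_at C (l - i - j))" by simp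
    qed
    also have "\<dots> = (\<Sum>i\<in>{lo A..hi A}. cf_at A i * cf_at (expn_mult B C) (l - i))"
      by (intro sum.cong refl arg_cong2[where f="(*)"], subst cf_at_mult) (use l in auto)
    also have "\<dots> = cf_at (expn_mult A (expn_mult B C)) l"
      using l by (subst cf_at_mult) auto
    finally show "cf_at (expn_mult (expn_mult A B) C) l = cf_at (expn_mult A (expn_mult B C)) l" .
  qed
qed (auto simp: val_mult ac_simps min_add_distrib_left min_add_distrib_right)

lemma id_distrib: "expn_eq_on e (expn_mult (expn_add A B) C) (expn_add (expn_mult A C) (expn_mult B C))"
proof (rule eq_from_val)
  show "\<forall>l\<in>{lo (expn_mult (expn_add A B) C)..hi (expn_mult (expn_add A B) C)}.
     cf_at (expn_mult (expn_add A B) C) l = cf_at (expn_add (expn_mult A C) (expn_mult B C)) l"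
  proof
    fix l assume l: "l \<in> {lo (expn_mult (expn_add A B) C)..hi (expn_mult (expn_add A B) C)}"
    let ?I = "{min (lo A) (lo B)..min (hi A) (hi B)}"
    have "cf_at (expn_mult (expn_add A B) C) l = (\<Sum>i\<in>?I. cf_at (expn_add A B) i * cf_at C (l - i))"
      using l by (subst cf_at_mult) auto
    also have "\<dots> = (\<Sum>i\<in>?I. cf_at A i * cf_at C (l - i)) + (\<Sum>i\<in>?I. cf_at B i * cf_at C (l - i))"
      by (simp add: sum.distrib[symmetric] cf_at_add distrib_right)
    also have "(\<Sum>i\<in>?I. cf_at A i * cf_at C (l - i)) = (\<Sum>i\<in>{lo A..hi A}. cf_at A i * cf_at C (l - i))"
      by (rule sum_same) (use l in \<open>auto simp: cf_at_out\<close>)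
    also have "(\<Sum>i\<in>?I. cf_at B i * cf_at C (l - i)) = (\<Sum>i\<in>{lo B..hi B}. cf_at B i * cf_at C (l - i))"
      by (rule sum_same) (use l in \<open>auto simp: cf_at_out\<close>)
    also have "(\<Sum>i\<in>{lo A..hi A}. cf_at A i * cf_at C (l - i)) + (\<Sum>i\<in>{lo B..hi B}. cf_at B i * cf_at C (l - i))
        = cf_at (expn_add (expn_mult A C) (expn_mult B C)) l"
    proof -
      have "l \<le> hi (expn_mult A C)" "l \<le> hi (expn_mult B C)" using l by auto
      then show ?thesis by (simp add: cf_at_add cf_at_mult del: mult_sel)
    qed
    finally show "cf_at (expn_mult (expn_add A B) C) l = cf_at (expn_add (expn_mult A C) (expn_mult B C)) l" .
  qed
qed (auto simp: val_mult val_add algebra_simps min_add_distrib_left min_add_distrib_right)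

lemma recip_conv:
  assumes "b h \<noteq> 0"
  shows "(\<Sum>r\<in>{0..n}. b (h + int r) * recip_c b h (n - r)) = (if n = 0 then 1 else 0)"
proof (cases "n = 0")
  case True then show ?thesis using assms by simp
next
  case False
  have "{0..n} = insert 0 {1..n}" by auto
  then have "(\<Sum>r\<in>{0..n}. b (h + int r) * recip_c b h (n - r))
      = b h * recip_c b h n + (\<Sum>r\<in>{1..n}. b (h + int r) * recip_c b h (n - r))"
    by simp
  also have "b h * recip_c b h n = - (\<Sum>r\<in>{1..n}. b (h + int r) * recip_c b h (n - r))"
    using False assms by (subst recip_c.simps) simp
  finally show ?thesis using False by simp
qed

lemma inv_sel[simp]: "lo (expn_inv A) = - lo A" "hi (expn_inv A) = hi A - 2 * lo A"
  by (simp_all add: expn_inv_def Let_def)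

lemma cf_at_inv: "cf_at (expn_inv A) l =
   (if - lo A \<le> l \<and> l \<le> hi A - 2 * lo A then recip_c (cf_at A) (lo A) (nat (l + lo A)) else 0)"
  by (simp add: cf_at_def expn_inv_def Let_def)

lemma val_inv: "expn_val (expn_inv A) x = inverse (expn_val A x)"
proof -
  have "poly_part (expn_inv A) x = (\<Sum>l\<in>{- lo A..hi A - 2 * lo A}.
      (if - lo A \<le> l \<and> l \<le> hi A - 2 * lo A then recip_c (cf_at A) (lo A) (nat (l + lo A)) else 0) * x powi l)"
    unfolding poly_part_def by (simp add: cf_at_inv)
  then show ?thesis by (simp add: expn_val_def expn_inv_def Let_def)
qed

lemma id_mult_inv:
  assumes "lo A \<le> hi A" "pivotal A" "\<forall>x\<in>{0<..e}. expn_val A x \<noteq> 0"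
  shows "expn_eq_on e (expn_mult A (expn_inv A)) (expn_one (hi A - lo A))"
proof (rule eq_from_val)
  show "\<forall>l\<in>{lo (expn_mult A (expn_inv A))..hi (expn_mult A (expn_inv A))}.
     cf_at (expn_mult A (expn_inv A)) l = cf_at (expn_one (hi A - lo A)) l"
  proof
    fix l assume l: "l \<in> {lo (expn_mult A (expn_inv A))..hi (expn_mult A (expn_inv A))}"
    then have l0: "0 \<le> l" "l \<le> hi A - lo A" by auto
    then obtain n where n: "l = int n" using nonneg_int_cases by blast
    have b0: "cf_at A (lo A) \<noteq> 0" using assms by (simp add: cf_at_def pivotal_def)
    have "cf_at (expn_mult A (expn_inv A)) l =
        (\<Sum>i\<in>{0..n}. cf_at A (lo A + int i) * cf_at (expn_inv A) (- lo A + l - int i))"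
      using l0 n by (simp add: cf_at_def expn_mult_def Let_def)
    also have "\<dots> = (\<Sum>i\<in>{0..n}. cf_at A (lo A + int i) * recip_c (cf_at A) (lo A) (n - i))"
      using l0 n by (intro sum.cong refl) (auto simp: cf_at_inv nat_diff_distrib)
    also have "\<dots> = (if n = 0 then 1 else 0)" by (rule recip_conv[where b="cf_at A" and h="lo A", OF b0])
    also have "\<dots> = cf_at (expn_one (hi A - lo A)) l"
      using l0 n by (simp add: cf_at_one)
    finally show "cf_at (expn_mult A (expn_inv A)) l = cf_at (expn_one (hi A - lo A)) l" .
  qed
qed (use assms in \<open>auto simp: val_mult val_inv val_one\<close>)

theorem lemma4:
  fixes e0 :: real and A B C :: expn
  assumes "0 < e0" "e0 \<le> 1"
    and "is_expn A" "is_expn B" "is_expn C"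
  shows "expn_eq_on e0 (expn_add A (expn_zero (lo A) (hi A))) A
    \<and> expn_eq_on e0 (expn_mult A (expn_one (hi A - lo A))) A
    \<and> expn_eq_on e0 (expn_add A (expn_scale (-1) A)) (expn_zero (lo A) (hi A))
    \<and> (pivotal A \<longrightarrow> (\<forall>e'. 0 < e' \<and> e' \<le> e0 \<and> (\<forall>x\<in>{0<..e'}. expn_val A x \<noteq> 0) \<longrightarrow>
           expn_eq_on e' (expn_mult A (expn_inv A)) (expn_one (hi A - lo A))))
    \<and> expn_eq_on e0 (expn_add A B) (expn_add B A)
    \<and> expn_eq_on e0 (expn_add (expn_add A B) C) (expn_add A (expn_add B C))
    \<and> expn_eq_on e0 (expn_mult A B) (expn_mult B A)
    \<and> expn_eq_on e0 (expn_mult (expn_mult A B) C) (expn_mult A (expn_mult B C))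
    \<and> expn_eq_on e0 (expn_mult (expn_add A B) C) (expn_add (expn_mult A C) (expn_mult B C))"
proof -
  have le: "lo A \<le> hi A" using assms(3) by (simp add: is_expn_def)
  show ?thesis
    using le by (auto simp del: add_sel mult_sel intro: id_add_zero id_mult_one id_add_neg id_mult_inv
      id_add_comm id_add_assoc id_mult_comm id_mult_assoc id_distrib)
qed

end
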